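(* Let $\mathbb X$ be a basic space and $\mathcal D=(D,<,\rho)$ a computable partially ordered set. The classes $\mathrm{Max}_{\mathrm{Rec}}[\mathbb X\to\mathcal D]$ and $\mathrm{Max}_{\mathrm{PR}}[\mathbb X\to\mathcal D]$ contain the same total functions: $\mathrm{Max}_{\mathrm{PR}}[\mathbb X\to\mathcal D]\cap D^{\mathbb X}=\mathrm{Max}_{\mathrm{Rec}}[\mathbb X\to\mathcal D]\cap D^{\mathbb X}$.
   Context: A basic space is a finite non-empty product of sets each of which is $\mathbb N$, $\mathbb Z$, or $A^*$ for some finite alphabet $A$. A computable partially ordered set is a triple $\mathcal D=(D,<,\rho)$ where $\rho:\mathbb N\to D$ is a bijection and $<$ is a strict partial order on $D$ with $\{(m,n):\rho(m)<\rho(n)\}$ computable; a partial function into $D$ is partial (resp. total) computable if its composition with $\rho^{-1}$ is. For a partial $f:\mathbb X\times\mathbb N\to D$ monotone increasing in its second argument on its domain, $\max^{\mathcal D}f$ is the partial function defined exactly at those $x$ for which $\{f(x,t):t,\ f(x,t)\text{ defined}\}$ is finite and non-empty, with value its maximum. $\mathrm{Max}_{\mathrm{PR}}[\mathbb X\to\mathcal D]$ (resp. $\mathrm{Max}_{\mathrm{Rec}}[\mathbb X\to\mathcal D]$) is the class of all $\max^{\mathcal D}f$ with $f$ partial computable (resp. total computable) and monotone increasing in its second argument. $D^{\mathbb X}$ is the set of total functions $\mathbb X\to D$. *)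

theory Defs
  imports Main "HOL-Library.Nat_Bijection"
begin

datatype rf = Zr | Sc | Pj nat | Cn rf "rf list" | Pr rf rf | Mn rf

inductive eval :: "rf \<Rightarrow> nat list \<Rightarrow> nat \<Rightarrow> bool" where
  ev_Zr: "eval Zr xs 0"
| ev_Sc: "eval Sc (x # xs) (Suc x)"
| ev_Pj: "i < length xs \<Longrightarrow> eval (Pj i) xs (xs ! i)"
| ev_Cn: "list_all2 (\<lambda>g y. eval g xs y) gs ys \<Longrightarrow> eval f ys z \<Longrightarrow> eval (Cn f gs) xs z"
| ev_Pr0: "eval f xs y \<Longrightarrow> eval (Pr f g) (0 # xs) y"
| ev_PrS: "eval (Pr f g) (n # xs) r \<Longrightarrow> eval g (n # r # xs) y \<Longrightarrow> eval (Pr f g) (Suc n # xs) y"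
| ev_Mn: "eval f (y # xs) 0 \<Longrightarrow> (\<forall>z<y. \<exists>v. v \<noteq> 0 \<and> eval f (z # xs) v)
          \<Longrightarrow> eval (Mn f) xs y"

text \<open>Components: N, Z, or A* with A = {0..<k}, k > 0 (a finite alphabet).\<close>
datatype comp = CN | CZ | CW nat
datatype val = VN nat | VZ int | VW "nat list"

definition basic_space :: "comp list \<Rightarrow> bool" where
  "basic_space X \<longleftrightarrow> X \<noteq> [] \<and> (\<forall>k. CW k \<in> set X \<longrightarrow> k > 0)"

fun memc :: "comp \<Rightarrow> val \<Rightarrow> bool" where
  "memc CN (VN _) = True"
| "memc CZ (VZ _) = True"
| "memc (CW k) (VW w) = (\<forall>a\<in>set w. a < k)"
| "memc _ _ = False"

definition inX :: "comp list \<Rightarrow> val list \<Rightarrow> bool" where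
  "inX X x \<longleftrightarrow> list_all2 memc X x"

fun code_val :: "val \<Rightarrow> nat" where
  "code_val (VN n) = prod_encode (0, n)"
| "code_val (VZ z) = prod_encode (1, int_encode z)"
| "code_val (VW w) = prod_encode (2, list_encode w)"

definition code :: "val list \<Rightarrow> nat" where
  "code x = list_encode (map code_val x)"

definition computable_poset :: "('d \<Rightarrow> 'd \<Rightarrow> bool) \<Rightarrow> (nat \<Rightarrow> 'd) \<Rightarrow> bool" where
  "computable_poset lt \<rho> \<longleftrightarrow> bij \<rho> \<and>
     (\<forall>a. \<not> lt a a) \<and> (\<forall>a b c. lt a b \<longrightarrow> lt b c \<longrightarrow> lt a c) \<and>
     (\<exists>c. \<forall>m n. eval c [m, n] (if lt (\<rho> m) (\<rho> n) then 1 else 0))"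

definition pcomp2 :: "comp list \<Rightarrow> (nat \<Rightarrow> 'd) \<Rightarrow> (val list \<Rightarrow> nat \<Rightarrow> 'd option) \<Rightarrow> bool" where
  "pcomp2 X \<rho> f \<longleftrightarrow> (\<exists>c. \<forall>x t n. inX X x \<longrightarrow> (eval c [code x, t] n \<longleftrightarrow> f x t = Some (\<rho> n)))"

definition tcomp2 :: "comp list \<Rightarrow> (nat \<Rightarrow> 'd) \<Rightarrow> (val list \<Rightarrow> nat \<Rightarrow> 'd option) \<Rightarrow> bool" where
  "tcomp2 X \<rho> f \<longleftrightarrow> pcomp2 X \<rho> f \<and> (\<forall>x t. inX X x \<longrightarrow> f x t \<noteq> None)"

definition mono2 :: "comp list \<Rightarrow> ('d \<Rightarrow> 'd \<Rightarrow> bool) \<Rightarrow> (val list \<Rightarrow> nat \<Rightarrow> 'd option) \<Rightarrow> bool" where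
  "mono2 X lt f \<longleftrightarrow> (\<forall>x s t a b. inX X x \<longrightarrow> s \<le> t \<longrightarrow> f x s = Some a \<longrightarrow> f x t = Some b
                       \<longrightarrow> (a = b \<or> lt a b))"

definition maxD :: "('d \<Rightarrow> 'd \<Rightarrow> bool) \<Rightarrow> (val list \<Rightarrow> nat \<Rightarrow> 'd option) \<Rightarrow> val list \<Rightarrow> 'd option" where
  "maxD lt f x = (let S = {d. \<exists>t. f x t = Some d} in
     if finite S \<and> S \<noteq> {} then Some (THE d. d \<in> S \<and> (\<forall>e\<in>S. e = d \<or> lt e d)) else None)"

text \<open>Functions X \<rightharpoonup> D are represented as val list \<Rightarrow> 'd option, undefined outside X.\<close>
definition MaxPR :: "comp list \<Rightarrow> ('d \<Rightarrow> 'd \<Rightarrow> bool) \<Rightarrow> (nat \<Rightarrow> 'd) \<Rightarrow> (val list \<Rightarrow> 'd option) set" where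
  "MaxPR X lt \<rho> = {g. \<exists>f. pcomp2 X \<rho> f \<and> mono2 X lt f \<and>
                       (\<forall>x. g x = (if inX X x then maxD lt f x else None))}"

definition MaxRec :: "comp list \<Rightarrow> ('d \<Rightarrow> 'd \<Rightarrow> bool) \<Rightarrow> (nat \<Rightarrow> 'd) \<Rightarrow> (val list \<Rightarrow> 'd option) set" where
  "MaxRec X lt \<rho> = {g. \<exists>f. tcomp2 X \<rho> f \<and> mono2 X lt f \<and>
                       (\<forall>x. g x = (if inX X x then maxD lt f x else None))}"

definition TotalX :: "comp list \<Rightarrow> (val list \<Rightarrow> 'd option) set" where
  "TotalX X = {g. (\<forall>x. inX X x \<longrightarrow> g x \<noteq> None) \<and> (\<forall>x. \<not> inX X x \<longrightarrow> g x = None)}"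

end

theory Submission
  imports Defs
begin


definition comp_on :: "rf \<Rightarrow> nat \<Rightarrow> (nat list \<Rightarrow> bool) \<Rightarrow> (nat list \<Rightarrow> nat) \<Rightarrow> bool" where
 "comp_on c ar P F \<longleftrightarrow> (\<forall>xs. length xs = ar \<longrightarrow> P xs \<longrightarrow> eval c xs (F xs))"

lemma comp_onI: "(\<And>xs. length xs = ar \<Longrightarrow> P xs \<Longrightarrow> eval c xs (F xs)) \<Longrightarrow> comp_on c ar P F"
  by (auto simp: comp_on_def)
lemma comp_onD: "comp_on c ar P F \<Longrightarrow> length xs = ar \<Longrightarrow> P xs \<Longrightarrow> eval c xs (F xs)"
  by (auto simp: comp_on_def)
lemma comp_ext: "comp_on c ar P F \<Longrightarrow> (\<And>xs. length xs = ar \<Longrightarrow> P xs \<Longrightarrow> F xs = F' xs) \<Longrightarrow> comp_on c ar P F'"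
  by (auto simp: comp_on_def)
lemma comp_mono: "comp_on c ar (\<lambda>_. True) F \<Longrightarrow> comp_on c ar P F"
  by (auto simp: comp_on_def)

lemma c_Zr: "comp_on Zr ar P (\<lambda>_. 0)" by (auto simp: comp_on_def intro: ev_Zr)
lemma c_Pj: "i < ar \<Longrightarrow> comp_on (Pj i) ar P (\<lambda>xs. xs ! i)" by (auto simp: comp_on_def intro: ev_Pj)

lemma c_Cn: "comp_on f (length Gs) (\<lambda>_. True) F \<Longrightarrow> list_all2 (\<lambda>g G. comp_on g ar P G) gs Gs
   \<Longrightarrow> comp_on (Cn f gs) ar P (\<lambda>xs. F (map (\<lambda>G. G xs) Gs))"
proof (rule comp_onI)
  fix xs assume f: "comp_on f (length Gs) (\<lambda>_. True) F" and gs: "list_all2 (\<lambda>g G. comp_on g ar P G) gs Gs"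
    and l: "length xs = ar" and p: "P xs"
  have "list_all2 (\<lambda>g y. eval g xs y) gs (map (\<lambda>G. G xs) Gs)"
    using gs l p unfolding list_all2_map2 by (auto elim!: list_all2_mono dest: comp_onD)
  moreover have "eval f (map (\<lambda>G. G xs) Gs) (F (map (\<lambda>G. G xs) Gs))"
    by (rule comp_onD[OF f]) auto
  ultimately show "eval (Cn f gs) xs (F (map (\<lambda>G. G xs) Gs))" by (rule ev_Cn)
qed

fun prfn :: "(nat list \<Rightarrow> nat) \<Rightarrow> (nat list \<Rightarrow> nat) \<Rightarrow> nat \<Rightarrow> nat list \<Rightarrow> nat" where
  "prfn F G 0 ys = F ys"
| "prfn F G (Suc n) ys = G (n # prfn F G n ys # ys)"

lemma c_Pr: assumes "comp_on f ar (\<lambda>_. True) F" "comp_on g (Suc (Suc ar)) (\<lambda>_. True) G"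
  shows "comp_on (Pr f g) (Suc ar) P (\<lambda>xs. prfn F G (hd xs) (tl xs))"
proof (rule comp_onI)
  fix xs :: "nat list" assume "length xs = Suc ar"
  then obtain n ys where xs: "xs = n # ys" and l: "length ys = ar" by (cases xs) auto
  have "eval (Pr f g) (n # ys) (prfn F G n ys)"
  proof (induction n)
    case 0 then show ?case using assms(1) l by (auto intro: ev_Pr0 dest: comp_onD)
  next
    case (Suc n) then show ?case using comp_onD[OF assms(2), of "n # prfn F G n ys # ys"] l by (auto intro!: ev_PrS)
  qed
  then show "eval (Pr f g) xs (prfn F G (hd xs) (tl xs))" using xs by simp
qed

lemma c_Sc: "comp_on g ar P G \<Longrightarrow> comp_on (Cn Sc [g]) ar P (\<lambda>xs. Suc (G xs))"
proof -
  assume g: "comp_on g ar P G"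
  have "comp_on Sc 1 (\<lambda>_. True) (\<lambda>ys. Suc (hd ys))"
    by (rule comp_onI) (auto simp: length_Suc_conv intro: ev_Sc)
  then have "comp_on (Cn Sc [g]) ar P (\<lambda>xs. (\<lambda>ys. Suc (hd ys)) (map (\<lambda>G. G xs) [G]))"
    using g by (intro c_Cn) auto
  then show ?thesis by simp
qed

definition "IFZ = Pr (Pj 0) (Pj 3)"
definition "PRED = Pr Zr (Pj 0)"
definition "ADD = Pr (Pj 0) (Cn Sc [Pj 1])"
definition "rifz a b c = Cn IFZ [a, b, c]"
definition "rpred a = Cn PRED [a]"
definition "rsuc a = Cn Sc [a]"
fun cnst :: "nat \<Rightarrow> rf" where "cnst 0 = Zr" | "cnst (Suc n) = Cn Sc [cnst n]"

lemma c_suc: "comp_on g ar P G \<Longrightarrow> comp_on (rsuc g) ar P (\<lambda>xs. Suc (G xs))"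
  unfolding rsuc_def by (rule c_Sc)

lemma c_cnst: "comp_on (cnst n) ar P (\<lambda>_. n)"
  by (induction n) (auto intro: c_Zr c_Sc[THEN comp_ext])

lemma c_IFZ: "comp_on IFZ 3 (\<lambda>_. True) (\<lambda>xs. if hd xs = 0 then hd (tl xs) else hd (tl (tl xs)))"
proof -
  have "comp_on IFZ (Suc 2) (\<lambda>_. True) (\<lambda>xs. prfn (\<lambda>ys. ys ! 0) (\<lambda>ys. ys ! 3) (hd xs) (tl xs))"
    unfolding IFZ_def by (rule c_Pr) (auto intro: c_Pj)
  then have "comp_on IFZ 3 (\<lambda>_. True) (\<lambda>xs. prfn (\<lambda>ys. ys ! 0) (\<lambda>ys. ys ! 3) (hd xs) (tl xs))"
    by (simp add: numeral_3_eq_3)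
  then show ?thesis
  proof (rule comp_ext)
    fix xs :: "nat list" assume "length xs = 3"
    then obtain a b c where xs: "xs = [a, b, c]" by (auto simp: length_Suc_conv numeral_3_eq_3)
    show "prfn (\<lambda>ys. ys ! 0) (\<lambda>ys. ys ! 3) (hd xs) (tl xs) = (if hd xs = 0 then hd (tl xs) else hd (tl (tl xs)))"
      unfolding xs by (cases a) auto
  qed
qed

lemma c_ifz: "comp_on a ar P A \<Longrightarrow> comp_on b ar P B \<Longrightarrow> comp_on c ar P C \<Longrightarrow>
   comp_on (rifz a b c) ar P (\<lambda>xs. if A xs = 0 then B xs else C xs)"
proof -
  assume a: "comp_on a ar P A" and b: "comp_on b ar P B" and c: "comp_on c ar P C"
  have i: "comp_on IFZ (length [A, B, C]) (\<lambda>_. True) (\<lambda>xs. if hd xs = 0 then hd (tl xs) else hd (tl (tl xs)))"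
    using c_IFZ by (simp add: numeral_3_eq_3)
  have "comp_on (Cn IFZ [a, b, c]) ar P (\<lambda>xs. (\<lambda>xs. if hd xs = 0 then hd (tl xs) else hd (tl (tl xs))) (map (\<lambda>G. G xs) [A, B, C]))"
    by (rule c_Cn[OF i]) (simp add: a b c)
  then show ?thesis unfolding rifz_def by (rule comp_ext) simp
qed

lemma c_pred: "comp_on a ar P A \<Longrightarrow> comp_on (rpred a) ar P (\<lambda>xs. A xs - 1)"
proof -
  assume a: "comp_on a ar P A"
  have "comp_on PRED (Suc 0) (\<lambda>_. True) (\<lambda>xs. prfn (\<lambda>_. 0) (\<lambda>ys. ys ! 0) (hd xs) (tl xs))"
    unfolding PRED_def by (rule c_Pr) (auto intro: c_Pj c_Zr)
  then have p0: "comp_on PRED (Suc 0) (\<lambda>_. True) (\<lambda>xs. hd xs - 1)"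
  proof (rule comp_ext)
    fix xs :: "nat list" assume "length xs = Suc 0"
    then obtain m where xs: "xs = [m]" by (auto simp: length_Suc_conv)
    show "prfn (\<lambda>_. 0) (\<lambda>ys. ys ! 0) (hd xs) (tl xs) = hd xs - 1"
      unfolding xs by (cases m) auto
  qed
  then have p: "comp_on PRED (length [A]) (\<lambda>_. True) (\<lambda>xs. hd xs - 1)" by simp
  show ?thesis unfolding rpred_def using c_Cn[OF p, where gs="[a]" and ar=ar and P=P] a by simp
qed

lemma c_add: "comp_on a ar P A \<Longrightarrow> comp_on b ar P B \<Longrightarrow> comp_on (Cn ADD [a, b]) ar P (\<lambda>xs. A xs + B xs)"
proof -
  assume a: "comp_on a ar P A" and b: "comp_on b ar P B"
  have "comp_on ADD (Suc 1) (\<lambda>_. True) (\<lambda>xs. prfn (\<lambda>ys. ys ! 0) (\<lambda>ys. Suc (ys ! 1)) (hd xs) (tl xs))"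
    unfolding ADD_def by (rule c_Pr) (auto intro: c_Pj c_Sc)
  then have p0: "comp_on ADD (Suc 1) (\<lambda>_. True) (\<lambda>xs. xs ! 0 + xs ! 1)"
  proof (rule comp_ext)
    fix xs :: "nat list" assume "length xs = Suc 1"
    then obtain m n where xs: "xs = [m, n]" by (auto simp: length_Suc_conv)
    show "prfn (\<lambda>ys. ys ! 0) (\<lambda>ys. Suc (ys ! 1)) (hd xs) (tl xs) = xs ! 0 + xs ! 1"
      unfolding xs by (induction m) auto
  qed
  then have p: "comp_on ADD (length [A, B]) (\<lambda>_. True) (\<lambda>xs. xs ! 0 + xs ! 1)" by simp
  show ?thesis using c_Cn[OF p, where gs="[a, b]" and ar=ar and P=P] a b by simp
qed



fun prb :: "(nat list \<Rightarrow> nat option) \<Rightarrow> (nat list \<Rightarrow> nat option) \<Rightarrow> nat \<Rightarrow> nat list \<Rightarrow> nat option" where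
  "prb F G 0 ys = F ys"
| "prb F G (Suc n) ys = (case prb F G n ys of None \<Rightarrow> None | Some r \<Rightarrow> G (n # r # ys))"

fun srch :: "(nat list \<Rightarrow> nat option) \<Rightarrow> nat \<Rightarrow> nat list \<Rightarrow> nat" where
  "srch F 0 xs = 1"
| "srch F (Suc m) xs = (let h = srch F m xs in if h \<noteq> 1 then h else
     (case F (m # xs) of None \<Rightarrow> 0 | Some v \<Rightarrow> if v = 0 then m + 2 else 1))"

primrec bev :: "rf \<Rightarrow> nat \<Rightarrow> nat list \<Rightarrow> nat option" where
  "bev Zr = (\<lambda>k xs. Some 0)"
| "bev Sc = (\<lambda>k xs. case xs of [] \<Rightarrow> None | x # _ \<Rightarrow> Some (Suc x))"
| "bev (Pj i) = (\<lambda>k xs. if i < length xs then Some (xs ! i) else None)"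
| "bev (Cn f gs) = (\<lambda>k xs. let rs = map (\<lambda>h. h k xs) (map bev gs) in
      if None \<in> set rs then None else bev f k (map the rs))"
| "bev (Pr f g) = (\<lambda>k xs. case xs of [] \<Rightarrow> None | n # ys \<Rightarrow> prb (bev f k) (bev g k) n ys)"
| "bev (Mn f) = (\<lambda>k xs. let h = srch (bev f k) k xs in if 2 \<le> h then Some (h - 2) else None)"

lemma srch1: "srch F m xs = 1 \<longleftrightarrow> (\<forall>z<m. \<exists>v. v \<noteq> 0 \<and> F (z # xs) = Some v)"
proof (induction m)
  case 0 then show ?case by simp
next
  case (Suc m)
  show ?case
  proof (cases "srch F m xs = 1")
    case True then show ?thesis using Suc
      by (auto simp: less_Suc_eq split: option.splits)
  next
    case False then show ?thesis using Suc
      by (auto simp: less_Suc_eq)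
  qed
qed

lemma srch2: "srch F k xs = y + 2 \<longleftrightarrow> y < k \<and> F (y # xs) = Some 0 \<and> (\<forall>z<y. \<exists>v. v \<noteq> 0 \<and> F (z # xs) = Some v)"
proof (induction k)
  case 0 then show ?case by simp
next
  case (Suc m)
  show ?case
  proof (cases "srch F m xs = 1")
    case True
    then have all: "\<forall>z<m. \<exists>v. v \<noteq> 0 \<and> F (z # xs) = Some v" using srch1 by blast
    show ?thesis
    proof
      assume "srch F (Suc m) xs = y + 2"
      with True show "y < Suc m \<and> F (y # xs) = Some 0 \<and> (\<forall>z<y. \<exists>v. v \<noteq> 0 \<and> F (z # xs) = Some v)"
        using all by (auto split: option.splits if_splits)
    next
      assume r: "y < Suc m \<and> F (y # xs) = Some 0 \<and> (\<forall>z<y. \<exists>v. v \<noteq> 0 \<and> F (z # xs) = Some v)"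
      then have "y = m" using all by (metis less_SucE option.inject)
      then show "srch F (Suc m) xs = y + 2" using True r by simp
    qed
  next
    case False
    have "srch F (Suc m) xs = srch F m xs" using False by simp
    moreover have notall: "\<not> (\<forall>z<m. \<exists>v. v \<noteq> 0 \<and> F (z # xs) = Some v)"
      using False srch1 by blast
    ultimately show ?thesis
    proof -
      note eq = \<open>srch F (Suc m) xs = srch F m xs\<close>
      show ?thesis
      proof
        assume "srch F (Suc m) xs = y + 2"
        then show "y < Suc m \<and> F (y # xs) = Some 0 \<and> (\<forall>z<y. \<exists>v. v \<noteq> 0 \<and> F (z # xs) = Some v)"
          using eq Suc by simp
      next
        assume r: "y < Suc m \<and> F (y # xs) = Some 0 \<and> (\<forall>z<y. \<exists>v. v \<noteq> 0 \<and> F (z # xs) = Some v)"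
        then have "y \<noteq> m" using notall by blast
        then have "y < m" using r by simp
        then show "srch F (Suc m) xs = y + 2" using eq Suc r by simp
      qed
    qed
  qed
qed



lemma prb_mono: "(\<And>ys v. F ys = Some v \<Longrightarrow> F' ys = Some v) \<Longrightarrow> (\<And>ys v. G ys = Some v \<Longrightarrow> G' ys = Some v)
  \<Longrightarrow> prb F G n ys = Some v \<Longrightarrow> prb F' G' n ys = Some v"
  by (induction n arbitrary: v) (auto split: option.splits)

lemma bev_mono: "bev c k xs = Some n \<Longrightarrow> k \<le> k' \<Longrightarrow> bev c k' xs = Some n"
proof (induction c arbitrary: xs n)
  case (Cn f gs)
  let ?rs = "map (\<lambda>g. bev g k xs) gs"
  have nn: "None \<notin> set ?rs" using Cn.prems by (auto simp: Let_def split: if_splits)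
  have "map (\<lambda>g. bev g k' xs) gs = ?rs"
  proof (rule map_cong[OF refl])
    fix g assume g: "g \<in> set gs"
    then obtain v where "bev g k xs = Some v" using nn by (cases "bev g k xs") force+
    then show "bev g k' xs = bev g k xs" using Cn.IH(2)[OF g] Cn.prems(2) by simp
  qed
  note eq = this
  have "bev (Cn f gs) k xs = bev f k (map the ?rs)" using nn by (simp add: Let_def comp_def)
  then have "bev f k (map the ?rs) = Some n" using Cn.prems by simp
  then have "bev f k' (map the ?rs) = Some n" using Cn.IH(1) Cn.prems(2) by blast
  moreover have "bev (Cn f gs) k' xs = bev f k' (map the ?rs)"
  proof -
    have e2: "map (\<lambda>h. h k' xs) (map bev gs) = map (\<lambda>h. h k xs) (map bev gs)" using eq by (simp add: comp_def)
    show ?thesis using nn by (simp only: bev.simps Let_def e2) (simp add: comp_def)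
  qed
  ultimately show ?case by simp
next
  case (Pr f g)
  then show ?case by (auto split: list.splits elim!: prb_mono[rotated 2])
next
  case (Mn f)
  then have s: "srch (bev f k) k xs = n + 2" by (simp add: Let_def split: if_splits)
  then have a: "n < k" "bev f k (n # xs) = Some 0" "\<forall>z<n. \<exists>v. v \<noteq> 0 \<and> bev f k (z # xs) = Some v"
    unfolding srch2 by auto
  have "n < k'" using a Mn.prems(2) by simp
  moreover have "bev f k' (n # xs) = Some 0" using Mn.IH a(2) Mn.prems(2) by blast
  moreover have "\<forall>z<n. \<exists>v. v \<noteq> 0 \<and> bev f k' (z # xs) = Some v" using Mn.IH a(3) Mn.prems(2) by blast
  ultimately have "srch (bev f k') k' xs = n + 2" unfolding srch2 by blast
  then show ?case by simp
qed auto



lemma bev_sound: "bev c k xs = Some n \<Longrightarrow> eval c xs n"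
proof (induction c arbitrary: xs n)
  case Zr then show ?case by (auto intro: ev_Zr)
next
  case Sc then show ?case by (auto intro: ev_Sc split: list.splits)
next
  case (Pj i) then show ?case by (auto intro: ev_Pj split: if_splits)
next
  case (Cn f gs)
  let ?rs = "map (\<lambda>g. bev g k xs) gs"
  have nn: "None \<notin> set ?rs" and fv: "bev f k (map the ?rs) = Some n"
    using Cn.prems by (auto simp: Let_def comp_def split: if_splits)
  have "list_all2 (\<lambda>g y. eval g xs y) gs (map the ?rs)"
    unfolding list_all2_map2 list_all2_same
  proof
    fix g assume g: "g \<in> set gs"
    then obtain v where "bev g k xs = Some v" using nn by (cases "bev g k xs") force+
    then show "eval g xs (the (bev g k xs))" using Cn.IH(2)[OF g] by simp
  qed
  then show ?case using Cn.IH(1)[OF fv] by (rule ev_Cn)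
next
  case (Pr f g)
  then obtain m ys where xs: "xs = m # ys" by (cases xs) auto
  have "prb (bev f k) (bev g k) m ys = Some n \<Longrightarrow> eval (Pr f g) (m # ys) n" for n
  proof (induction m arbitrary: n)
    case 0
    then have "bev f k ys = Some n" by simp
    then show ?case by (intro ev_Pr0 Pr.IH(1))
  next
    case (Suc m)
    then obtain r where r: "prb (bev f k) (bev g k) m ys = Some r" and g: "bev g k (m # r # ys) = Some n"
      by (auto split: option.splits)
    show ?case by (rule ev_PrS[OF Suc.IH[OF r] Pr.IH(2)[OF g]])
  qed
  then show ?case using Pr.prems xs by simp
next
  case (Mn f)
  then have s: "srch (bev f k) k xs = n + 2" by (simp add: Let_def split: if_splits)
  then have a: "bev f k (n # xs) = Some 0" "\<forall>z<n. \<exists>v. v \<noteq> 0 \<and> bev f k (z # xs) = Some v"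
    unfolding srch2 by auto
  show ?case
  proof (rule ev_Mn)
    show "eval f (n # xs) 0" using Mn.IH a(1) by blast
    show "\<forall>z<n. \<exists>v. v \<noteq> 0 \<and> eval f (z # xs) v" using Mn.IH a(2) by blast
  qed
qed



lemma common_k: "list_all2 (\<lambda>g y. \<exists>k. bev g k xs = Some y) gs ys \<Longrightarrow> \<exists>k. list_all2 (\<lambda>g y. bev g k xs = Some y) gs ys"
proof (induction rule: list_all2_induct)
  case Nil then show ?case by simp
next
  case (Cons g gs y ys)
  then obtain k1 k2 where h1: "bev g k1 xs = Some y" and h2: "list_all2 (\<lambda>g y. bev g k2 xs = Some y) gs ys" by blast
  have "bev g (max k1 k2) xs = Some y" by (rule bev_mono[OF h1]) simp
  moreover have "list_all2 (\<lambda>g y. bev g (max k1 k2) xs = Some y) gs ys"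
    using h2 by (rule list_all2_mono) (erule bev_mono, simp)
  ultimately have "list_all2 (\<lambda>g y. bev g (max k1 k2) xs = Some y) (g # gs) (y # ys)" by simp
  then show ?case by blast
qed

lemma common_z: assumes "\<forall>z<y. \<exists>k. bev f k (z # xs) = Some (v z)"
  shows "\<exists>K. \<forall>z<y. bev f K (z # xs) = Some (v z)"
proof -
  have "\<forall>z. \<exists>k. z < y \<longrightarrow> bev f k (z # xs) = Some (v z)" using assms by blast
  from choice[OF this] obtain kk where kk: "\<forall>z. z < y \<longrightarrow> bev f (kk z) (z # xs) = Some (v z)" by blast
  let ?K = "Max (kk ` {..<y})"
  have "\<forall>z<y. bev f ?K (z # xs) = Some (v z)"
  proof (intro allI impI)
    fix z assume z: "z < y"
    have "kk z \<le> ?K" using z by (intro Max_ge) auto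
    then show "bev f ?K (z # xs) = Some (v z)" using kk z bev_mono by blast
  qed
  then show ?thesis by blast
qed

lemma bev_complete: "eval c xs n \<Longrightarrow> \<exists>k. bev c k xs = Some n"
proof (induction rule: eval.induct)
  case (ev_Zr xs) show ?case by simp
next
  case (ev_Sc x xs) show ?case by simp
next
  case (ev_Pj i xs)
  have "bev (Pj i) 0 xs = Some (xs ! i)" using ev_Pj.hyps by simp
  then show ?case by blast
next
  case (ev_Pr0 f xs y g)
  obtain k where "bev f k xs = Some y" using ev_Pr0.IH by blast
  then have "bev (Pr f g) k (0 # xs) = Some y" by simp
  then show ?case by blast
next
  case (ev_Cn xs gs ys f z)
  have "list_all2 (\<lambda>g y. \<exists>k. bev g k xs = Some y) gs ys" by (rule list_all2_mono[OF ev_Cn.IH(1)]) blast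
  then obtain k1 where k1: "list_all2 (\<lambda>g y. bev g k1 xs = Some y) gs ys" using common_k by blast
  obtain k2 where k2: "bev f k2 ys = Some z" using ev_Cn.IH(2) by blast
  let ?K = "max k1 k2"
  have "list_all2 (\<lambda>g y. bev g ?K xs = Some y) gs ys" using k1 by (rule list_all2_mono) (erule bev_mono, simp)
  then have me: "map (\<lambda>g. bev g ?K xs) gs = map Some ys"
    by (induction rule: list_all2_induct) auto
  have fz: "bev f ?K ys = Some z" by (rule bev_mono[OF k2]) simp
  have "None \<notin> set (map Some ys)" by auto
  then have nn: "None \<notin> set (map (\<lambda>g. bev g ?K xs) gs)" unfolding me .
  have "map the (map (\<lambda>g. bev g ?K xs) gs) = ys" unfolding me by (simp add: comp_def)
  with nn fz have "bev (Cn f gs) ?K xs = Some z" by (simp add: Let_def comp_def)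
  then show ?case by blast
next
  case (ev_PrS f g n xs r y)
  obtain k1 where a1: "bev (Pr f g) k1 (n # xs) = Some r" using ev_PrS.IH(1) by blast
  obtain k2 where a2: "bev g k2 (n # r # xs) = Some y" using ev_PrS.IH(2) by blast
  have "bev (Pr f g) (max k1 k2) (n # xs) = Some r" by (rule bev_mono[OF a1]) simp
  moreover have "bev g (max k1 k2) (n # r # xs) = Some y" by (rule bev_mono[OF a2]) simp
  ultimately
  have "bev (Pr f g) (max k1 k2) (Suc n # xs) = Some y" by simp
  then show ?case by blast
next
  case (ev_Mn f y xs)
  obtain k0 where k0: "bev f k0 (y # xs) = Some 0" using ev_Mn.IH(1) by blast
  have "\<forall>z<y. \<exists>v. v \<noteq> 0 \<and> (\<exists>k. bev f k (z # xs) = Some v)" using ev_Mn.IH(2) by blast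
  then have "\<forall>z. \<exists>v. z < y \<longrightarrow> v \<noteq> 0 \<and> (\<exists>k. bev f k (z # xs) = Some v)" by blast
  from choice[OF this] obtain v where v: "\<forall>z<y. v z \<noteq> 0 \<and> (\<exists>k. bev f k (z # xs) = Some (v z))"
    by blast
  then obtain K where K: "\<forall>z<y. bev f K (z # xs) = Some (v z)" using common_z[of y f xs v] by blast
  let ?K = "max (max K k0) (Suc y)"
  have "bev f ?K (y # xs) = Some 0" using k0 by (rule bev_mono) simp
  moreover have "\<forall>z<y. \<exists>v. v \<noteq> 0 \<and> bev f ?K (z # xs) = Some v"
  proof (intro allI impI)
    fix z assume z: "z < y"
    have "bev f K (z # xs) = Some (v z)" using K z by blast
    then have "bev f ?K (z # xs) = Some (v z)" by (rule bev_mono) simp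
    then show "\<exists>w. w \<noteq> 0 \<and> bev f ?K (z # xs) = Some w" using v z by blast
  qed
  ultimately have sr: "srch (bev f ?K) ?K xs = y + 2" unfolding srch2 by (intro conjI) simp_all
  have "bev (Mn f) ?K xs = (let h = srch (bev f ?K) ?K xs in if 2 \<le> h then Some (h - 2) else None)"
    by (simp only: bev.simps)
  then have "bev (Mn f) ?K xs = Some y" by (simp only: sr Let_def) simp
  then show ?case by blast
qed

lemma eval_det: "eval c xs n \<Longrightarrow> eval c xs m \<Longrightarrow> n = m"
proof -
  assume "eval c xs n" "eval c xs m"
  then obtain k1 k2 where a1: "bev c k1 xs = Some n" and a2: "bev c k2 xs = Some m" using bev_complete by blast
  have "bev c (max k1 k2) xs = Some n" by (rule bev_mono[OF a1]) simp
  moreover have "bev c (max k1 k2) xs = Some m" by (rule bev_mono[OF a2]) simp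
  ultimately show "n = m" by simp
qed



fun enc :: "nat option \<Rightarrow> nat" where "enc None = 0" | "enc (Some n) = Suc n"

lemma enc0: "enc x = 0 \<longleftrightarrow> x = None" by (cases x) auto
lemma enc_the: "x \<noteq> None \<Longrightarrow> enc x - 1 = the x" by (cases x) auto

definition Fsem :: "rf \<Rightarrow> nat list \<Rightarrow> nat" where "Fsem c = (\<lambda>ys. enc (bev c (hd ys) (tl ys)))"

fun andall :: "rf list \<Rightarrow> rf" where "andall [] = cnst 1" | "andall (r # rs) = rifz r Zr (andall rs)"

lemma c_andall: "list_all2 (\<lambda>r G. comp_on r ar P G) rs Gs \<Longrightarrow>
  comp_on (andall rs) ar P (\<lambda>xs. if (\<exists>G\<in>set Gs. G xs = 0) then 0 else 1)"
proof (induction rule: list_all2_induct)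
  case Nil then show ?case using c_cnst[of 1] by simp
next
  case (Cons r rs G Gs)
  have "comp_on (rifz r Zr (andall rs)) ar P (\<lambda>xs. if G xs = 0 then 0 else (if (\<exists>G\<in>set Gs. G xs = 0) then 0 else 1))"
    by (rule c_ifz[OF Cons.hyps(1) c_Zr Cons.IH])
  then show ?case unfolding andall.simps by (rule comp_ext) auto
qed

lemma c_projs: "d + n \<le> ar \<Longrightarrow> list_all2 (\<lambda>g G. comp_on g ar P G) (map (\<lambda>i. Pj (i + d)) [0..<n]) (map (\<lambda>i xs. xs ! (i + d)) [0..<n])"
  by (induction n) (auto simp: list_all2_append intro: c_Pj)

lemma map_nth_drop: "length xs = d + n \<Longrightarrow> map (\<lambda>i. xs ! (i + d)) [0..<n] = drop d xs"
  by (rule nth_equalityI) (auto simp: add.commute)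

primrec clk :: "rf \<Rightarrow> nat \<Rightarrow> rf" where
  "clk Zr = (\<lambda>ar. cnst 1)"
| "clk Sc = (\<lambda>ar. if ar = 0 then Zr else rsuc (rsuc (Pj 1)))"
| "clk (Pj i) = (\<lambda>ar. if i < ar then rsuc (Pj (Suc i)) else Zr)"
| "clk (Cn f gs) = (\<lambda>ar. rifz (andall (map (\<lambda>h. h ar) (map clk gs))) Zr
      (Cn (clk f (length gs)) (Pj 0 # map rpred (map (\<lambda>h. h ar) (map clk gs)))))"
| "clk (Pr f g) = (\<lambda>ar. if ar = 0 then Zr else
     Cn (Pr (clk f (ar - 1)) (rifz (Pj 1) Zr (Cn (clk g (Suc ar)) ([Pj 2, Pj 0, rpred (Pj 1)] @ map (\<lambda>i. Pj (i + 3)) [0..<ar - 1]))))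
        ([Pj 1, Pj 0] @ map (\<lambda>i. Pj (i + 2)) [0..<ar - 1]))"
| "clk (Mn f) = (\<lambda>ar. let v = Cn (clk f (Suc ar)) (Pj 2 # Pj 0 # map (\<lambda>i. Pj (i + 3)) [0..<ar]);
      H = Pr (cnst 1) (rifz (Pj 1) Zr (rifz (rpred (Pj 1)) (rifz v Zr (rifz (rpred v) (rsuc (rsuc (Pj 0))) (cnst 1))) (Pj 1)));
      h = Cn H (Pj 0 # Pj 0 # map (\<lambda>i. Pj (i + 1)) [0..<ar])
      in rifz h Zr (rifz (rpred h) Zr (rpred h)))"

abbreviation "TT \<equiv> (\<lambda>_::nat list. True)"

lemma clk_Zr: "comp_on (clk Zr ar) (Suc ar) TT (Fsem Zr)"
  unfolding clk.simps by (rule comp_ext[OF c_cnst]) (auto simp: Fsem_def)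

lemma clk_Sc: "comp_on (clk Sc ar) (Suc ar) TT (Fsem Sc)"
proof (cases "ar = 0")
  case True
  then show ?thesis by (auto intro!: comp_ext[OF c_Zr] simp: Fsem_def length_Suc_conv)
next
  case False
  have "comp_on (rsuc (rsuc (Pj 1))) (Suc ar) TT (\<lambda>xs. Suc (Suc (xs ! 1)))"
    using False by (intro c_suc c_Pj) simp
  then show ?thesis using False
    by (auto elim!: comp_ext simp: Fsem_def length_Suc_conv neq_Nil_conv split: list.splits)
qed

lemma clk_Pj: "comp_on (clk (Pj i) ar) (Suc ar) TT (Fsem (Pj i))"
proof (cases "i < ar")
  case True
  have "comp_on (rsuc (Pj (Suc i))) (Suc ar) TT (\<lambda>xs. Suc (xs ! Suc i))"
    using True by (intro c_suc c_Pj) simp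
  then show ?thesis using True
    by (auto elim!: comp_ext simp: Fsem_def length_Suc_conv)
next
  case False
  then show ?thesis by (auto intro!: comp_ext[OF c_Zr] simp: Fsem_def length_Suc_conv)
qed

lemma clk_Cn:
  assumes IHf: "\<And>ar. comp_on (clk f ar) (Suc ar) TT (Fsem f)"
    and IHg: "\<And>g ar. g \<in> set gs \<Longrightarrow> comp_on (clk g ar) (Suc ar) TT (Fsem g)"
  shows "comp_on (clk (Cn f gs) ar) (Suc ar) TT (Fsem (Cn f gs))"
proof -
  define rs where "rs = map (\<lambda>g. clk g ar) gs"
  define Gs where "Gs = map Fsem gs"
  have L: "list_all2 (\<lambda>r G. comp_on r (Suc ar) TT G) rs Gs"
    unfolding rs_def Gs_def list_all2_map1 list_all2_map2 list_all2_same using IHg by auto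
  have A: "comp_on (andall rs) (Suc ar) TT (\<lambda>ys. if (\<exists>G\<in>set Gs. G ys = 0) then 0 else 1)"
    by (rule c_andall[OF L])
  have L1: "list_all2 (\<lambda>r G. comp_on (rpred r) (Suc ar) TT (\<lambda>ys. G ys - 1)) rs Gs"
    by (rule list_all2_mono[OF L]) (rule c_pred)
  have L2: "list_all2 (\<lambda>g G. comp_on g (Suc ar) TT G) (Pj 0 # map rpred rs) ((\<lambda>ys. ys ! 0) # map (\<lambda>G ys. G ys - 1) Gs)"
    using L1 by (simp add: list_all2_map1 list_all2_map2 c_Pj)
  have f: "comp_on (clk f (length gs)) (length ((\<lambda>ys. ys ! 0) # map (\<lambda>G ys. G ys - 1) Gs)) TT (Fsem f)"
    using IHf by (simp add: Gs_def)
  have C: "comp_on (Cn (clk f (length gs)) (Pj 0 # map rpred rs)) (Suc ar) TT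
     (\<lambda>ys. Fsem f (map (\<lambda>G. G ys) ((\<lambda>ys. ys ! 0) # map (\<lambda>G ys. G ys - 1) Gs)))"
    by (rule c_Cn[OF f L2])
  have "comp_on (rifz (andall rs) Zr (Cn (clk f (length gs)) (Pj 0 # map rpred rs))) (Suc ar) TT
     (\<lambda>ys. if (if (\<exists>G\<in>set Gs. G ys = 0) then 0 else (1::nat)) = 0 then 0
           else Fsem f (map (\<lambda>G. G ys) ((\<lambda>ys. ys ! 0) # map (\<lambda>G ys. G ys - 1) Gs)))"
    by (rule comp_ext[OF c_ifz[OF A c_Zr C]]) auto
  then have "comp_on (clk (Cn f gs) ar) (Suc ar) TT
     (\<lambda>ys. if (if (\<exists>G\<in>set Gs. G ys = 0) then 0 else (1::nat)) = 0 then 0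
           else Fsem f (map (\<lambda>G. G ys) ((\<lambda>ys. ys ! 0) # map (\<lambda>G ys. G ys - 1) Gs)))"
    by (simp add: rs_def comp_def)
  then show ?thesis
  proof (rule comp_ext)
    fix ys :: "nat list" assume "length ys = Suc ar"
    then obtain k xs where ys: "ys = k # xs" by (cases ys) auto
    show "(if (if (\<exists>G\<in>set Gs. G ys = 0) then 0 else (1::nat)) = 0 then 0
           else Fsem f (map (\<lambda>G. G ys) ((\<lambda>ys. ys ! 0) # map (\<lambda>G ys. G ys - 1) Gs))) = Fsem (Cn f gs) ys"
    proof (cases "\<exists>g\<in>set gs. bev g k xs = None")
      case True
      then have "\<exists>G\<in>set Gs. G ys = 0" by (force simp: Gs_def Fsem_def ys)
      moreover have bn: "bev (Cn f gs) k xs = None" using True by (force simp: Let_def)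
      have r: "Fsem (Cn f gs) ys = 0" unfolding Fsem_def ys list.sel bn by simp
      show ?thesis unfolding r using calculation by simp
    next
      case False
      then have "\<not> (\<exists>G\<in>set Gs. G ys = 0)" by (auto simp: Gs_def Fsem_def ys enc0)
      moreover have me: "map (\<lambda>g. enc (bev g k xs) - Suc 0) gs = map (\<lambda>g. the (bev g k xs)) gs"
        using False by (auto simp: enc_the[simplified])
      moreover have "None \<notin> set (map (\<lambda>g. bev g k xs) gs)" using False by auto
      ultimately show ?thesis by (auto simp: Fsem_def ys Gs_def Let_def comp_def me)
    qed
  qed
qed


lemma la2_nil: "list_all2 P [] []" by simp
lemma la2_cons: "P x y \<Longrightarrow> list_all2 P xs ys \<Longrightarrow> list_all2 P (x # xs) (y # ys)" by simp
lemma c_pred_Pj: "i < ar \<Longrightarrow> comp_on (rpred (Pj i)) ar P (\<lambda>xs. xs ! i - 1)"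
  by (rule c_pred[OF c_Pj])

lemma prfn_Pr: "prfn (Fsem f) (\<lambda>zs. if zs ! 1 = 0 then 0 else Fsem g (zs ! 2 # zs ! 0 # (zs ! 1 - 1) # drop 3 zs)) n (k # ys)
   = enc (prb (bev f k) (bev g k) n ys)"
proof (induction n)
  case 0 then show ?case by (simp add: Fsem_def)
next
  case (Suc n)
  show ?case
  proof (cases "prb (bev f k) (bev g k) n ys")
    case None then show ?thesis using Suc by (simp add: numeral_3_eq_3)
  next
    case (Some r) then show ?thesis using Suc by (simp add: numeral_3_eq_3 Fsem_def numeral_2_eq_2)
  qed
qed

lemma clk_Pr:
  assumes IHf: "\<And>ar. comp_on (clk f ar) (Suc ar) TT (Fsem f)"
    and IHg: "\<And>ar. comp_on (clk g ar) (Suc ar) TT (Fsem g)"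
  shows "comp_on (clk (Pr f g) ar) (Suc ar) TT (Fsem (Pr f g))"
proof (cases ar)
  case 0
  then show ?thesis by (auto intro!: comp_ext[OF c_Zr] simp: Fsem_def length_Suc_conv)
next
  case (Suc a)
  define Gs where "Gs = [\<lambda>zs::nat list. zs ! 2, \<lambda>zs. zs ! 0, \<lambda>zs. zs ! 1 - 1] @ map (\<lambda>i zs. zs ! (i + 3)) [0..<a]"
  define Fs where "Fs = (\<lambda>zs::nat list. if zs ! 1 = 0 then 0 else Fsem g (zs ! 2 # zs ! 0 # (zs ! 1 - 1) # drop 3 zs))"
  have g: "comp_on (clk g (Suc (Suc a))) (length Gs) TT (Fsem g)" using IHg by (simp add: Gs_def)
  have args: "list_all2 (\<lambda>r G. comp_on r (Suc (Suc (Suc a))) TT G)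
     ([Pj 2, Pj 0, rpred (Pj 1)] @ map (\<lambda>i. Pj (i + 3)) [0..<a]) Gs"
    unfolding Gs_def
    by (intro list_all2_appendI c_projs la2_cons la2_nil c_Pj c_pred_Pj) simp_all
  have inner: "comp_on (Cn (clk g (Suc (Suc a))) ([Pj 2, Pj 0, rpred (Pj 1)] @ map (\<lambda>i. Pj (i + 3)) [0..<a]))
      (Suc (Suc (Suc a))) TT (\<lambda>zs. Fsem g (zs ! 2 # zs ! 0 # (zs ! 1 - 1) # drop 3 zs))"
  proof (rule comp_ext[OF c_Cn[OF g args]])
    fix zs :: "nat list" assume l: "length zs = Suc (Suc (Suc a))"
    have "map (\<lambda>i. zs ! (i + 3)) [0..<a] = drop 3 zs" using l by (intro map_nth_drop) simp
    then show "Fsem g (map (\<lambda>G. G zs) Gs) = Fsem g (zs ! 2 # zs ! 0 # (zs ! 1 - 1) # drop 3 zs)"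
      by (simp add: Gs_def comp_def)
  qed
  have st: "comp_on (rifz (Pj 1) Zr (Cn (clk g (Suc (Suc a))) ([Pj 2, Pj 0, rpred (Pj 1)] @ map (\<lambda>i. Pj (i + 3)) [0..<a])))
      (Suc (Suc (Suc a))) TT Fs"
    unfolding Fs_def by (rule c_ifz[OF c_Pj c_Zr inner]) simp
  define PR where "PR = Pr (clk f a) (rifz (Pj 1) Zr (Cn (clk g (Suc (Suc a))) ([Pj 2, Pj 0, rpred (Pj 1)] @ map (\<lambda>i. Pj (i + 3)) [0..<a])))"
  have H: "comp_on PR (Suc (Suc a)) TT (\<lambda>zs. prfn (Fsem f) Fs (hd zs) (tl zs))"
    unfolding PR_def by (rule c_Pr[OF IHf st])
  define Hs where "Hs = [\<lambda>zs::nat list. zs ! 1, \<lambda>zs. zs ! 0] @ map (\<lambda>i zs. zs ! (i + 2)) [0..<a]"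
  have H': "comp_on PR (length Hs) TT (\<lambda>zs. prfn (Fsem f) Fs (hd zs) (tl zs))" using H by (simp add: Hs_def)
  have args2: "list_all2 (\<lambda>r G. comp_on r (Suc (Suc a)) TT G) ([Pj 1, Pj 0] @ map (\<lambda>i. Pj (i + 2)) [0..<a]) Hs"
    unfolding Hs_def by (intro list_all2_appendI c_projs la2_cons la2_nil c_Pj) simp_all
  have eq: "clk (Pr f g) (Suc a) = Cn PR ([Pj 1, Pj 0] @ map (\<lambda>i. Pj (i + 2)) [0..<a])"
    by (simp add: PR_def)
  show ?thesis unfolding Suc eq
  proof (rule comp_ext[OF c_Cn[OF H' args2]])
    fix ys :: "nat list" assume l: "length ys = Suc (Suc a)"
    then obtain k n ys' where ys: "ys = k # n # ys'" and l': "length ys' = a"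
      by (auto simp: length_Suc_conv)
    have "map (\<lambda>i. ys ! (i + 2)) [0..<a] = drop 2 ys" using l by (intro map_nth_drop) simp
    then have m: "map (\<lambda>G. G ys) Hs = n # k # ys'" by (simp add: Hs_def comp_def ys)
    have p: "prfn (Fsem f) Fs n (k # ys') = enc (prb (bev f k) (bev g k) n ys')"
      unfolding Fs_def by (rule prfn_Pr)
    have q: "Fsem (Pr f g) ys = enc (prb (bev f k) (bev g k) n ys')" by (simp add: Fsem_def ys)
    show "prfn (Fsem f) Fs (hd (map (\<lambda>G. G ys) Hs)) (tl (map (\<lambda>G. G ys) Hs)) = Fsem (Pr f g) ys"
      unfolding m list.sel p q ..
  qed
qed


lemma prfn_Mn:
  assumes "\<And>zs. Fs zs = (if zs ! 1 = 0 then 0 else if zs ! 1 - 1 = 0 then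
        (if Fsem f (zs ! 2 # zs ! 0 # drop 3 zs) = 0 then 0
         else if Fsem f (zs ! 2 # zs ! 0 # drop 3 zs) - 1 = 0 then Suc (Suc (zs ! 0)) else 1) else zs ! 1)"
  shows "prfn (\<lambda>_. 1) Fs m (k # xs) = srch (bev f k) m xs"
proof (induction m)
  case 0 then show ?case by simp
next
  case (Suc m)
  have F: "Fsem f (k # m # xs) = enc (bev f k (m # xs))" by (simp add: Fsem_def)
  show ?case
  proof (cases "srch (bev f k) m xs = 1")
    case True
    then show ?thesis using Suc F assms[of "m # 1 # k # xs"]
      by (cases "bev f k (m # xs)") (auto simp: numeral_3_eq_3 numeral_2_eq_2)
  next
    case False
    then show ?thesis using Suc assms[of "m # srch (bev f k) m xs # k # xs"]
      by (auto simp: Let_def)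
  qed
qed

lemma clk_Mn:
  assumes IHf: "\<And>ar. comp_on (clk f ar) (Suc ar) TT (Fsem f)"
  shows "comp_on (clk (Mn f) ar) (Suc ar) TT (Fsem (Mn f))"
proof -
  define v where "v = Cn (clk f (Suc ar)) (Pj 2 # Pj 0 # map (\<lambda>i. Pj (i + 3)) [0..<ar])"
  define H where "H = Pr (cnst 1) (rifz (Pj 1) Zr (rifz (rpred (Pj 1)) (rifz v Zr (rifz (rpred v) (rsuc (rsuc (Pj 0))) (cnst 1))) (Pj 1)))"
  define h where "h = Cn H (Pj 0 # Pj 0 # map (\<lambda>i. Pj (i + 1)) [0..<ar])"
  have eq: "clk (Mn f) ar = rifz h Zr (rifz (rpred h) Zr (rpred h))"
    by (simp add: v_def H_def h_def Let_def)
  define V where "V = (\<lambda>zs::nat list. Fsem f (zs ! 2 # zs ! 0 # drop 3 zs))"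
  define Vs where "Vs = (\<lambda>zs::nat list. zs ! 2) # (\<lambda>zs. zs ! 0) # map (\<lambda>i zs. zs ! (i + 3)) [0..<ar]"
  have f: "comp_on (clk f (Suc ar)) (length Vs) TT (Fsem f)" using IHf by (simp add: Vs_def)
  have args: "list_all2 (\<lambda>r G. comp_on r (Suc (Suc (Suc ar))) TT G) (Pj 2 # Pj 0 # map (\<lambda>i. Pj (i + 3)) [0..<ar]) Vs"
    unfolding Vs_def by (intro c_projs la2_cons c_Pj) simp_all
  have cv: "comp_on v (Suc (Suc (Suc ar))) TT V"
    unfolding v_def
  proof (rule comp_ext[OF c_Cn[OF f args]])
    fix zs :: "nat list" assume l: "length zs = Suc (Suc (Suc ar))"
    have "map (\<lambda>i. zs ! (i + 3)) [0..<ar] = drop 3 zs" using l by (intro map_nth_drop) simp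
    then show "Fsem f (map (\<lambda>G. G zs) Vs) = V zs" by (simp add: Vs_def V_def comp_def)
  qed
  define Fs where "Fs = (\<lambda>zs::nat list. if zs ! 1 = 0 then 0 else if zs ! 1 - 1 = 0 then
        (if V zs = 0 then 0 else if V zs - 1 = 0 then Suc (Suc (zs ! 0)) else 1) else zs ! 1)"
  have inner: "comp_on (rifz v Zr (rifz (rpred v) (rsuc (rsuc (Pj 0))) (cnst 1))) (Suc (Suc (Suc ar))) TT
     (\<lambda>zs. if V zs = 0 then 0 else if V zs - 1 = 0 then Suc (Suc (zs ! 0)) else 1)"
    by (rule c_ifz[OF cv c_Zr c_ifz[OF c_pred[OF cv] c_suc[OF c_suc[OF c_Pj]] c_cnst]]) simp
  have st: "comp_on (rifz (Pj 1) Zr (rifz (rpred (Pj 1)) (rifz v Zr (rifz (rpred v) (rsuc (rsuc (Pj 0))) (cnst 1))) (Pj 1)))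
     (Suc (Suc (Suc ar))) TT Fs"
    unfolding Fs_def by (rule c_ifz[OF c_Pj c_Zr c_ifz[OF c_pred_Pj inner c_Pj]]) simp_all
  have cH: "comp_on H (Suc (Suc ar)) TT (\<lambda>zs. prfn (\<lambda>_. 1) Fs (hd zs) (tl zs))"
    unfolding H_def by (rule c_Pr[OF c_cnst st])
  define Hs where "Hs = (\<lambda>zs::nat list. zs ! 0) # (\<lambda>zs. zs ! 0) # map (\<lambda>i zs. zs ! (i + 1)) [0..<ar]"
  have cH': "comp_on H (length Hs) TT (\<lambda>zs. prfn (\<lambda>_. 1) Fs (hd zs) (tl zs))" using cH by (simp add: Hs_def)
  have args2: "list_all2 (\<lambda>r G. comp_on r (Suc ar) TT G) (Pj 0 # Pj 0 # map (\<lambda>i. Pj (i + 1)) [0..<ar]) Hs"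
    unfolding Hs_def by (intro c_projs la2_cons c_Pj) simp_all
  have sem: "prfn (\<lambda>_. 1) Fs m (k # xs) = srch (bev f k) m xs" for m k xs
    by (rule prfn_Mn) (simp add: Fs_def V_def)
  have ch: "comp_on h (Suc ar) TT (\<lambda>ys. srch (bev f (hd ys)) (hd ys) (tl ys))"
    unfolding h_def
  proof (rule comp_ext[OF c_Cn[OF cH' args2]])
    fix ys :: "nat list" assume l: "length ys = Suc ar"
    then obtain k xs where ys: "ys = k # xs" by (cases ys) auto
    have "map (\<lambda>i. ys ! (i + 1)) [0..<ar] = drop 1 ys" using l by (intro map_nth_drop) simp
    then have m: "map (\<lambda>G. G ys) Hs = k # k # xs" by (simp add: Hs_def comp_def ys)
    show "prfn (\<lambda>_. 1) Fs (hd (map (\<lambda>G. G ys) Hs)) (tl (map (\<lambda>G. G ys) Hs)) = srch (bev f (hd ys)) (hd ys) (tl ys)"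
      unfolding ys unfolding m[unfolded ys] list.sel sem ..
  qed
  show ?thesis unfolding eq
  proof (rule comp_ext[OF c_ifz[OF ch c_Zr c_ifz[OF c_pred[OF ch] c_Zr c_pred[OF ch]]]])
    fix ys :: "nat list" assume l: "length ys = Suc ar"
    then obtain k xs where ys: "ys = k # xs" by (cases ys) auto
    show "(if srch (bev f (hd ys)) (hd ys) (tl ys) = 0 then 0
          else if srch (bev f (hd ys)) (hd ys) (tl ys) - 1 = 0 then 0 else srch (bev f (hd ys)) (hd ys) (tl ys) - 1)
          = Fsem (Mn f) ys"
      by (simp add: Fsem_def ys Let_def) linarith
  qed
qed

lemma clk_ok: "comp_on (clk c ar) (Suc ar) TT (Fsem c)"
proof (induction c arbitrary: ar)
  case Zr then show ?case by (rule clk_Zr)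
next
  case Sc then show ?case by (rule clk_Sc)
next
  case (Pj i) then show ?case by (rule clk_Pj)
next
  case (Cn f gs) then show ?case by (intro clk_Cn) auto
next
  case (Pr f g) then show ?case by (intro clk_Pr) auto
next
  case (Mn f) then show ?case by (intro clk_Mn) auto
qed



lemma c_Cn_gen: "comp_on f (length Gs) Pf F \<Longrightarrow> list_all2 (\<lambda>g G. comp_on g ar P G) gs Gs
   \<Longrightarrow> (\<And>xs. length xs = ar \<Longrightarrow> P xs \<Longrightarrow> Pf (map (\<lambda>G. G xs) Gs))
   \<Longrightarrow> comp_on (Cn f gs) ar P (\<lambda>xs. F (map (\<lambda>G. G xs) Gs))"
proof (rule comp_onI)
  fix xs assume f: "comp_on f (length Gs) Pf F" and gs: "list_all2 (\<lambda>g G. comp_on g ar P G) gs Gs"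
    and pf: "\<And>xs. length xs = ar \<Longrightarrow> P xs \<Longrightarrow> Pf (map (\<lambda>G. G xs) Gs)"
    and l: "length xs = ar" and p: "P xs"
  have "list_all2 (\<lambda>g y. eval g xs y) gs (map (\<lambda>G. G xs) Gs)"
    using gs l p unfolding list_all2_map2 by (auto elim!: list_all2_mono dest: comp_onD)
  moreover have "eval f (map (\<lambda>G. G xs) Gs) (F (map (\<lambda>G. G xs) Gs))"
    by (rule comp_onD[OF f]) (auto intro: pf l p)
  ultimately show "eval (Cn f gs) xs (F (map (\<lambda>G. G xs) Gs))" by (rule ev_Cn)
qed

lemma c_Mn: assumes "comp_on Q (Suc ar) TT Qf"
  shows "comp_on (Mn Q) ar (\<lambda>xs. \<exists>y. Qf (y # xs) = 0) (\<lambda>xs. LEAST y. Qf (y # xs) = 0)"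
proof (rule comp_onI)
  fix xs :: "nat list" assume l: "length xs = ar" and e: "\<exists>y. Qf (y # xs) = 0"
  let ?y = "LEAST y. Qf (y # xs) = 0"
  have q: "Qf (?y # xs) = 0" using e by (rule LeastI_ex)
  show "eval (Mn Q) xs ?y"
  proof (rule ev_Mn)
    have "eval Q (?y # xs) (Qf (?y # xs))" by (rule comp_onD[OF assms]) (simp_all add: l)
    then show "eval Q (?y # xs) 0" unfolding q .
    show "\<forall>z<?y. \<exists>v. v \<noteq> 0 \<and> eval Q (z # xs) v"
    proof (intro allI impI)
      fix z assume "z < ?y"
      then have "Qf (z # xs) \<noteq> 0" by (rule not_less_Least)
      moreover have "eval Q (z # xs) (Qf (z # xs))" by (rule comp_onD[OF assms]) (simp_all add: l)
      ultimately show "\<exists>v. v \<noteq> 0 \<and> eval Q (z # xs) v" by blast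
    qed
  qed
qed

fun lf :: "(nat \<Rightarrow> nat option) \<Rightarrow> nat \<Rightarrow> nat" where
  "lf B 0 = 0"
| "lf B (Suc m) = (case B m of None \<Rightarrow> lf B m | Some v \<Rightarrow> Suc v)"

lemma lf_nz: "\<exists>s<m. B s \<noteq> None \<Longrightarrow> lf B m \<noteq> 0"
  by (induction m) (auto simp: less_Suc_eq split: option.splits)

lemma lf_spec: "lf B m \<noteq> 0 \<Longrightarrow> \<exists>s<m. B s = Some (lf B m - 1) \<and> (\<forall>s'. s < s' \<and> s' < m \<longrightarrow> B s' = None)"
proof (induction m)
  case 0 then show ?case by simp
next
  case (Suc m)
  show ?case
  proof (cases "B m")
    case None
    then have "lf B m \<noteq> 0" using Suc.prems by simp
    then obtain s where "s < m" "B s = Some (lf B m - 1)" "\<forall>s'. s < s' \<and> s' < m \<longrightarrow> B s' = None"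
      using Suc.IH by blast
    then show ?thesis using None by (intro exI[of _ s]) (auto simp: less_Suc_eq)
  next
    case (Some v)
    then show ?thesis by (intro exI[of _ m]) auto
  qed
qed

definition CLm :: "rf \<Rightarrow> rf" where "CLm c = Cn (clk c 2) [Pj 2, Pj 3, Pj 0]"
definition ACC :: "rf \<Rightarrow> rf" where "ACC c = Pr (cnst 0) (rifz (CLm c) (Pj 1) (cnst 1))"
definition QQ :: "rf \<Rightarrow> rf" where "QQ c = rifz (Cn (ACC c) [rsuc (Pj 0), Pj 0, Pj 1]) (cnst 1) Zr"
definition Wp :: "rf \<Rightarrow> rf" where "Wp c = Cn (Mn (QQ c)) [Pj 0]"
definition Tp :: "rf \<Rightarrow> rf" where "Tp c = Cn ADD [Pj 1, Wp c]"
definition LF :: "rf \<Rightarrow> rf" where "LF c = Pr (cnst 0) (rifz (CLm c) (Pj 1) (CLm c))"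
definition top :: "rf \<Rightarrow> rf" where "top c = rpred (Cn (LF c) [rsuc (Tp c), Tp c, Pj 0])"

lemma c_CLm: "comp_on (CLm c) 4 TT (\<lambda>zs. enc (bev c (zs ! 2) [zs ! 3, zs ! 0]))"
proof -
  have f: "comp_on (clk c 2) (length [\<lambda>zs::nat list. zs ! 2, \<lambda>zs. zs ! 3, \<lambda>zs. zs ! 0]) TT (Fsem c)"
    using clk_ok[of c 2] by (simp add: numeral_3_eq_3)
  have a: "list_all2 (\<lambda>r G. comp_on r 4 TT G) [Pj 2, Pj 3, Pj 0] [\<lambda>zs::nat list. zs ! 2, \<lambda>zs. zs ! 3, \<lambda>zs. zs ! 0]"
    by (intro la2_cons la2_nil c_Pj) simp_all
  show ?thesis unfolding CLm_def by (rule comp_ext[OF c_Cn[OF f a]]) (simp add: Fsem_def)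
qed

lemma acc_sem: "prfn (\<lambda>_. 0) (\<lambda>zs. if enc (bev c (zs ! 2) [zs ! 3, zs ! 0]) = 0 then zs ! 1 else 1) m [K, a]
   = (if \<exists>s<m. bev c K [a, s] \<noteq> None then 1 else 0)"
  by (induction m) (auto simp: less_Suc_eq enc0 numeral_3_eq_3 numeral_2_eq_2)

lemma c_ACC: "comp_on (ACC c) 3 TT (\<lambda>zs. if \<exists>s<zs ! 0. bev c (zs ! 1) [zs ! 2, s] \<noteq> None then 1 else 0)"
proof -
  have st: "comp_on (rifz (CLm c) (Pj 1) (cnst 1)) (Suc (Suc 2)) TT
     (\<lambda>zs. if enc (bev c (zs ! 2) [zs ! 3, zs ! 0]) = 0 then zs ! 1 else 1)"
    using c_ifz[OF c_CLm c_Pj c_cnst, of 1 c 1] by simp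
  have "comp_on (ACC c) (Suc 2) TT (\<lambda>zs. prfn (\<lambda>_. 0) (\<lambda>zs. if enc (bev c (zs ! 2) [zs ! 3, zs ! 0]) = 0 then zs ! 1 else 1) (hd zs) (tl zs))"
    unfolding ACC_def by (rule c_Pr[OF c_cnst st])
  then have "comp_on (ACC c) 3 TT (\<lambda>zs. prfn (\<lambda>_. 0) (\<lambda>zs. if enc (bev c (zs ! 2) [zs ! 3, zs ! 0]) = 0 then zs ! 1 else 1) (hd zs) (tl zs))"
    by (simp add: numeral_3_eq_3)
  then show ?thesis
  proof (rule comp_ext)
    fix zs :: "nat list" assume "length zs = 3"
    then obtain m K a where zs: "zs = [m, K, a]" by (auto simp: length_Suc_conv numeral_3_eq_3)
    show "prfn (\<lambda>_. 0) (\<lambda>zs. if enc (bev c (zs ! 2) [zs ! 3, zs ! 0]) = 0 then zs ! 1 else 1) (hd zs) (tl zs) =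
       (if \<exists>s<zs ! 0. bev c (zs ! 1) [zs ! 2, s] \<noteq> None then 1 else 0)"
      unfolding zs using acc_sem[of c m K a] by (simp add: numeral_2_eq_2)
  qed
qed


lemma c_QQ: "comp_on (QQ c) 2 TT (\<lambda>zs. if \<exists>s<Suc (zs ! 0). bev c (zs ! 0) [zs ! 1, s] \<noteq> None then 0 else 1)"
proof -
  define Gs where "Gs = [\<lambda>zs::nat list. Suc (zs ! 0), \<lambda>zs. zs ! 0, \<lambda>zs. zs ! 1]"
  have f: "comp_on (ACC c) (length Gs) TT (\<lambda>zs. if \<exists>s<zs ! 0. bev c (zs ! 1) [zs ! 2, s] \<noteq> None then 1 else 0)"
    using c_ACC[of c] by (simp add: Gs_def numeral_3_eq_3)
  have a: "list_all2 (\<lambda>r G. comp_on r 2 TT G) [rsuc (Pj 0), Pj 0, Pj 1] Gs"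
    unfolding Gs_def by (intro la2_cons la2_nil c_Pj c_suc) simp_all
  have i: "comp_on (Cn (ACC c) [rsuc (Pj 0), Pj 0, Pj 1]) 2 TT
     (\<lambda>zs. if \<exists>s<Suc (zs ! 0). bev c (zs ! 0) [zs ! 1, s] \<noteq> None then 1 else 0)"
    by (rule comp_ext[OF c_Cn[OF f a]]) (simp add: Gs_def numeral_2_eq_2)
  show ?thesis unfolding QQ_def by (rule comp_ext[OF c_ifz[OF i c_cnst c_Zr]]) simp
qed

definition Dm :: "rf \<Rightarrow> nat \<Rightarrow> bool" where "Dm c a \<longleftrightarrow> (\<exists>y. \<exists>s<Suc y. bev c y [a, s] \<noteq> None)"
definition Wd :: "rf \<Rightarrow> nat \<Rightarrow> nat" where "Wd c a = (LEAST y. \<exists>s<Suc y. bev c y [a, s] \<noteq> None)"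

lemma c_Wp: "comp_on (Wp c) 2 (\<lambda>xs. Dm c (xs ! 0)) (\<lambda>xs. Wd c (xs ! 0))"
proof -
  define Qf where "Qf = (\<lambda>zs::nat list. if \<exists>s<Suc (zs ! 0). bev c (zs ! 0) [zs ! 1, s] \<noteq> None then 0 else (1::nat))"
  have q: "comp_on (QQ c) (Suc 1) TT Qf" using c_QQ[of c] by (simp add: Qf_def numeral_2_eq_2)
  have m: "comp_on (Mn (QQ c)) (length [\<lambda>xs::nat list. xs ! 0]) (\<lambda>xs. \<exists>y. Qf (y # xs) = 0) (\<lambda>xs. LEAST y. Qf (y # xs) = 0)"
    using c_Mn[OF q] by simp
  have a: "list_all2 (\<lambda>r G. comp_on r 2 (\<lambda>xs. Dm c (xs ! 0)) G) [Pj 0] [\<lambda>xs::nat list. xs ! 0]"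
    by (intro la2_cons la2_nil c_Pj) simp_all
  show ?thesis unfolding Wp_def
    by (rule comp_ext[OF c_Cn_gen[OF m a]]) (simp_all add: Qf_def Dm_def Wd_def)
qed

lemma c_Tp: "comp_on (Tp c) 2 (\<lambda>xs. Dm c (xs ! 0)) (\<lambda>xs. xs ! 1 + Wd c (xs ! 0))"
  unfolding Tp_def by (rule c_add[OF c_Pj c_Wp]) simp

lemma lf_sem: "prfn (\<lambda>_. 0) (\<lambda>zs. if enc (bev c (zs ! 2) [zs ! 3, zs ! 0]) = 0 then zs ! 1 else enc (bev c (zs ! 2) [zs ! 3, zs ! 0])) m [T, a]
   = lf (\<lambda>s. bev c T [a, s]) m"
  by (induction m) (auto simp: numeral_3_eq_3 numeral_2_eq_2 split: option.splits)

lemma c_LF: "comp_on (LF c) 3 TT (\<lambda>zs. lf (\<lambda>s. bev c (zs ! 1) [zs ! 2, s]) (zs ! 0))"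
proof -
  have st: "comp_on (rifz (CLm c) (Pj 1) (CLm c)) (Suc (Suc 2)) TT
     (\<lambda>zs. if enc (bev c (zs ! 2) [zs ! 3, zs ! 0]) = 0 then zs ! 1 else enc (bev c (zs ! 2) [zs ! 3, zs ! 0]))"
    using c_ifz[OF c_CLm c_Pj c_CLm, of 1 c c] by simp
  have "comp_on (LF c) (Suc 2) TT (\<lambda>zs. prfn (\<lambda>_. 0) (\<lambda>zs. if enc (bev c (zs ! 2) [zs ! 3, zs ! 0]) = 0 then zs ! 1 else enc (bev c (zs ! 2) [zs ! 3, zs ! 0])) (hd zs) (tl zs))"
    unfolding LF_def by (rule c_Pr[OF c_cnst st])
  then have "comp_on (LF c) 3 TT (\<lambda>zs. prfn (\<lambda>_. 0) (\<lambda>zs. if enc (bev c (zs ! 2) [zs ! 3, zs ! 0]) = 0 then zs ! 1 else enc (bev c (zs ! 2) [zs ! 3, zs ! 0])) (hd zs) (tl zs))"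
    by (simp add: numeral_3_eq_3)
  then show ?thesis
  proof (rule comp_ext)
    fix zs :: "nat list" assume "length zs = 3"
    then obtain m T a where zs: "zs = [m, T, a]" by (auto simp: length_Suc_conv numeral_3_eq_3)
    show "prfn (\<lambda>_. 0) (\<lambda>zs. if enc (bev c (zs ! 2) [zs ! 3, zs ! 0]) = 0 then zs ! 1 else enc (bev c (zs ! 2) [zs ! 3, zs ! 0])) (hd zs) (tl zs) =
       lf (\<lambda>s. bev c (zs ! 1) [zs ! 2, s]) (zs ! 0)"
      unfolding zs using lf_sem[of c m T a] by (simp add: numeral_2_eq_2)
  qed
qed

definition Fn :: "rf \<Rightarrow> nat \<Rightarrow> nat \<Rightarrow> nat" where
  "Fn c a t = lf (\<lambda>s. bev c (t + Wd c a) [a, s]) (Suc (t + Wd c a)) - 1"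

lemma c_top: "comp_on (top c) 2 (\<lambda>xs. Dm c (xs ! 0)) (\<lambda>xs. Fn c (xs ! 0) (xs ! 1))"
proof -
  define Gs where "Gs = [\<lambda>xs::nat list. Suc (xs ! 1 + Wd c (xs ! 0)), \<lambda>xs. xs ! 1 + Wd c (xs ! 0), \<lambda>xs. xs ! 0]"
  have f: "comp_on (LF c) (length Gs) TT (\<lambda>zs. lf (\<lambda>s. bev c (zs ! 1) [zs ! 2, s]) (zs ! 0))"
    using c_LF[of c] by (simp add: Gs_def numeral_3_eq_3)
  have a: "list_all2 (\<lambda>r G. comp_on r 2 (\<lambda>xs. Dm c (xs ! 0)) G) [rsuc (Tp c), Tp c, Pj 0] Gs"
    unfolding Gs_def by (intro la2_cons la2_nil c_Pj c_suc c_Tp) simp_all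
  show ?thesis unfolding top_def
    by (rule comp_ext[OF c_pred[OF c_Cn[OF f a]]]) (simp add: Gs_def Fn_def numeral_2_eq_2)
qed



lemma the_max:
  assumes "d0 \<in> A" "\<forall>e\<in>A. e = d0 \<or> lt e d0" "\<And>d. \<not> lt d d" "\<And>a b c. lt a b \<Longrightarrow> lt b c \<Longrightarrow> lt a c"
  shows "(THE d. d \<in> A \<and> (\<forall>e\<in>A. e = d \<or> lt e d)) = d0"
proof (rule the_equality)
  show "d0 \<in> A \<and> (\<forall>e\<in>A. e = d0 \<or> lt e d0)" using assms by blast
next
  fix d assume d: "d \<in> A \<and> (\<forall>e\<in>A. e = d \<or> lt e d)"
  show "d = d0"
  proof (rule ccontr)
    assume ne: "d \<noteq> d0"
    then have "lt d d0" using d assms(2) by blast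
    moreover have "d0 = d \<or> lt d0 d" using d assms(1) by blast
    then have "lt d0 d" using ne by metis
    ultimately show False using assms(3,4) by blast
  qed
qed

lemma chain_max:
  assumes "finite A" "A \<noteq> {}" "\<forall>a\<in>A. \<forall>b\<in>A. a = b \<or> lt a b \<or> lt b a"
    "\<And>a b c. lt a b \<Longrightarrow> lt b c \<Longrightarrow> lt a c"
  shows "\<exists>d\<in>A. \<forall>e\<in>A. e = d \<or> lt e d"
  using assms(1,2,3)
proof (induction A rule: finite_ne_induct)
  case (singleton x) then show ?case by simp
next
  case (insert x F)
  then obtain d where d: "d \<in> F" "\<forall>e\<in>F. e = d \<or> lt e d" by auto
  have "x = d \<or> lt x d \<or> lt d x" using insert.prems d(1) by blast
  then show ?case
  proof (elim disjE)
    assume "x = d" then show ?thesis using d by blast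
  next
    assume "lt x d" then show ?thesis using d by blast
  next
    assume dx: "lt d x"
    have "\<forall>e\<in>insert x F. e = x \<or> lt e x"
    proof
      fix e assume "e \<in> insert x F"
      then consider "e = x" | "e \<in> F" by blast
      then show "e = x \<or> lt e x"
      proof cases
        case 2
        then have "e = d \<or> lt e d" using d(2) by blast
        then show ?thesis using dx assms(4)[of e d x] by blast
      qed simp
    qed
    then show ?thesis by blast
  qed
qed

locale keyloc =
  fixes c :: rf and a :: nat and F :: "nat \<Rightarrow> 'd option" and \<rho> :: "nat \<Rightarrow> 'd" and lt :: "'d \<Rightarrow> 'd \<Rightarrow> bool"
  assumes ce: "\<And>t n. eval c [a, t] n \<longleftrightarrow> F t = Some (\<rho> n)"
    and bj: "bij \<rho>"
    and ir: "\<And>d. \<not> lt d d"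
    and tr: "\<And>x y z. lt x y \<Longrightarrow> lt y z \<Longrightarrow> lt x z"
    and mo: "\<And>s t u v. s \<le> t \<Longrightarrow> F s = Some u \<Longrightarrow> F t = Some v \<Longrightarrow> u = v \<or> lt u v"
    and fi: "finite {d. \<exists>t. F t = Some d}"
    and ne: "{d. \<exists>t. F t = Some d} \<noteq> {}"
begin

lemma val: "bev c K [a, s] = Some n \<Longrightarrow> F s = Some (\<rho> n)"
proof -
  assume h: "bev c K [a, s] = Some n"
  from bev_sound[OF h] show ?thesis unfolding ce .
qed

lemma Fdef: "F s = Some d \<Longrightarrow> \<exists>k. bev c k [a, s] = Some (inv \<rho> d)"
proof -
  assume "F s = Some d"
  then have "F s = Some (\<rho> (inv \<rho> d))" using bj by (simp add: bij_is_surj surj_f_inv_f)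
  then have "eval c [a, s] (inv \<rho> d)" unfolding ce .
  then show ?thesis by (rule bev_complete)
qed

lemma dom: "Dm c a"
proof -
  obtain s d where sd: "F s = Some d" using ne by blast
  then obtain k where k: "bev c k [a, s] = Some (inv \<rho> d)" using Fdef by blast
  have "bev c (max k s) [a, s] = Some (inv \<rho> d)" by (rule bev_mono[OF k]) simp
  then have "s < Suc (max k s) \<and> bev c (max k s) [a, s] \<noteq> None" by simp
  then have "\<exists>s'<Suc (max k s). bev c (max k s) [a, s'] \<noteq> None" by blast
  then show ?thesis unfolding Dm_def by (rule exI)
qed

abbreviation "TT' t \<equiv> t + Wd c a"

lemma sel: "\<exists>s<Suc (TT' t). bev c (TT' t) [a, s] = Some (Fn c a t) \<and>
   (\<forall>s'. s < s' \<and> s' < Suc (TT' t) \<longrightarrow> bev c (TT' t) [a, s'] = None)"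
proof -
  have "\<exists>s<Suc (Wd c a). bev c (Wd c a) [a, s] \<noteq> None"
    using dom unfolding Dm_def Wd_def by (rule LeastI_ex)
  then obtain s v where s: "s < Suc (Wd c a)" "bev c (Wd c a) [a, s] = Some v" by blast
  have "bev c (TT' t) [a, s] = Some v" by (rule bev_mono[OF s(2)]) simp
  moreover have "s < Suc (TT' t)" using s(1) by simp
  ultimately have "\<exists>s'<Suc (TT' t). bev c (TT' t) [a, s'] \<noteq> None" by auto
  then have "lf (\<lambda>s. bev c (TT' t) [a, s]) (Suc (TT' t)) \<noteq> 0" by (rule lf_nz)
  from lf_spec[OF this] show ?thesis unfolding Fn_def by simp
qed

lemma mono': "t1 \<le> t2 \<Longrightarrow> \<rho> (Fn c a t1) = \<rho> (Fn c a t2) \<or> lt (\<rho> (Fn c a t1)) (\<rho> (Fn c a t2))"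
proof -
  assume t: "t1 \<le> t2"
  obtain s1 where s1: "s1 < Suc (TT' t1)" "bev c (TT' t1) [a, s1] = Some (Fn c a t1)"
    using sel by blast
  obtain s2 where s2: "s2 < Suc (TT' t2)" "bev c (TT' t2) [a, s2] = Some (Fn c a t2)"
    "\<forall>s'. s2 < s' \<and> s' < Suc (TT' t2) \<longrightarrow> bev c (TT' t2) [a, s'] = None"
    using sel by blast
  have b: "bev c (TT' t2) [a, s1] = Some (Fn c a t1)" by (rule bev_mono[OF s1(2)]) (simp add: t)
  have "s1 \<le> s2"
  proof (rule ccontr)
    assume "\<not> s1 \<le> s2"
    then have "s2 < s1 \<and> s1 < Suc (TT' t2)" using s1(1) t by simp
    then show False using s2(3) b by auto
  qed
  moreover have "F s1 = Some (\<rho> (Fn c a t1))" using val[OF s1(2)] .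
  moreover have "F s2 = Some (\<rho> (Fn c a t2))" using val[OF s2(2)] .
  ultimately show ?thesis using mo by blast
qed

lemma maxeq: "{d. \<exists>t. Some (\<rho> (Fn c a t)) = Some d} \<subseteq> {d. \<exists>t. F t = Some d}"
proof
  fix d assume "d \<in> {d. \<exists>t. Some (\<rho> (Fn c a t)) = Some d}"
  then obtain t where d: "d = \<rho> (Fn c a t)" by auto
  obtain s where "bev c (TT' t) [a, s] = Some (Fn c a t)" using sel by blast
  then have "F s = Some d" using val d by blast
  then show "d \<in> {d. \<exists>t. F t = Some d}" by blast
qed

lemma maxD_eq:
  "(let S = {d. \<exists>t. Some (\<rho> (Fn c a t)) = Some d} in
     if finite S \<and> S \<noteq> {} then Some (THE d. d \<in> S \<and> (\<forall>e\<in>S. e = d \<or> lt e d)) else None)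
 = (let S = {d. \<exists>t. F t = Some d} in
     if finite S \<and> S \<noteq> {} then Some (THE d. d \<in> S \<and> (\<forall>e\<in>S. e = d \<or> lt e d)) else None)"
proof -
  define S where "S = {d. \<exists>t. F t = Some d}"
  define S' where "S' = {d. \<exists>t. Some (\<rho> (Fn c a t)) = Some d}"
  have sub: "S' \<subseteq> S" using maxeq unfolding S_def S'_def .
  have comp: "\<forall>x\<in>S. \<forall>y\<in>S. x = y \<or> lt x y \<or> lt y x"
  proof (intro ballI)
    fix x y assume "x \<in> S" "y \<in> S"
    then obtain s t where st: "F s = Some x" "F t = Some y" unfolding S_def by blast
    show "x = y \<or> lt x y \<or> lt y x"
    proof (cases "s \<le> t")
      case True then show ?thesis using mo[OF True st] by blast
    next
      case False then have "t \<le> s" by simp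
      then show ?thesis using mo[OF _ st(2) st(1)] by blast
    qed
  qed
  obtain d0 where d0: "d0 \<in> S" "\<forall>e\<in>S. e = d0 \<or> lt e d0"
    using chain_max[OF fi[folded S_def] ne[folded S_def] comp] tr by blast
  then obtain s0 where s0: "F s0 = Some d0" unfolding S_def by blast
  then obtain k0 where k0: "bev c k0 [a, s0] = Some (inv \<rho> d0)" using Fdef by blast
  define t where "t = max k0 s0"
  obtain s where s: "s < Suc (TT' t)" "bev c (TT' t) [a, s] = Some (Fn c a t)"
    "\<forall>s'. s < s' \<and> s' < Suc (TT' t) \<longrightarrow> bev c (TT' t) [a, s'] = None"
    using sel by blast
  have b0: "bev c (TT' t) [a, s0] = Some (inv \<rho> d0)" by (rule bev_mono[OF k0]) (simp add: t_def)
  have "s0 \<le> s"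
  proof (rule ccontr)
    assume "\<not> s0 \<le> s"
    moreover have "s0 < Suc (TT' t)" by (simp add: t_def)
    ultimately show False using s(3) b0 by auto
  qed
  have Fs: "F s = Some (\<rho> (Fn c a t))" using val[OF s(2)] .
  have "d0 = \<rho> (Fn c a t) \<or> lt d0 (\<rho> (Fn c a t))" using mo[OF \<open>s0 \<le> s\<close> s0 Fs] .
  moreover have "\<rho> (Fn c a t) \<in> S" using Fs unfolding S_def by blast
  ultimately have "\<rho> (Fn c a t) = d0" using d0(2) ir tr by blast
  then have d0S': "d0 \<in> S'" unfolding S'_def by blast
  have fS': "finite S'" using finite_subset[OF sub fi[folded S_def]] .
  have "(THE d. d \<in> S' \<and> (\<forall>e\<in>S'. e = d \<or> lt e d)) = d0"
    by (rule the_max[OF d0S' _ ir tr]) (use d0(2) sub in blast)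
  moreover have "(THE d. d \<in> S \<and> (\<forall>e\<in>S. e = d \<or> lt e d)) = d0"
    by (rule the_max[OF d0(1) d0(2) ir tr])
  ultimately show ?thesis using fS' d0S' fi ne unfolding S_def[symmetric] S'_def[symmetric] Let_def by auto
qed

end



theorem mainTheorem11:
  fixes X :: "comp list" and lt :: "'d \<Rightarrow> 'd \<Rightarrow> bool" and \<rho> :: "nat \<Rightarrow> 'd"
  assumes "basic_space X" and "computable_poset lt \<rho>"
  shows "MaxPR X lt \<rho> \<inter> TotalX X = MaxRec X lt \<rho> \<inter> TotalX X"
proof
  have bj: "bij \<rho>" and ir: "\<And>d. \<not> lt d d" and tr: "\<And>x y z. lt x y \<Longrightarrow> lt y z \<Longrightarrow> lt x z"
    using assms(2) unfolding computable_poset_def by blast+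
  show "MaxPR X lt \<rho> \<inter> TotalX X \<subseteq> MaxRec X lt \<rho> \<inter> TotalX X"
  proof
    fix g assume gin: "g \<in> MaxPR X lt \<rho> \<inter> TotalX X"
    then obtain f where pf: "pcomp2 X \<rho> f" and mf: "mono2 X lt f"
      and gf: "\<forall>x. g x = (if inX X x then maxD lt f x else None)"
      unfolding MaxPR_def by blast
    have gt: "\<And>x. inX X x \<Longrightarrow> g x \<noteq> None" using gin unfolding TotalX_def by blast
    from pf obtain c where ce: "\<forall>x t n. inX X x \<longrightarrow> (eval c [code x, t] n \<longleftrightarrow> f x t = Some (\<rho> n))"
      unfolding pcomp2_def by blast
    have loc: "keyloc c (code x) (f x) \<rho> lt" if inx: "inX X x" for x
    proof
      show "\<And>t n. eval c [code x, t] n \<longleftrightarrow> f x t = Some (\<rho> n)" using ce inx by blast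
      show "bij \<rho>" by (rule bj)
      show "\<And>d. \<not> lt d d" by (rule ir)
      show "\<And>x y z. lt x y \<Longrightarrow> lt y z \<Longrightarrow> lt x z" by (rule tr)
      show "\<And>s t u v. s \<le> t \<Longrightarrow> f x s = Some u \<Longrightarrow> f x t = Some v \<Longrightarrow> u = v \<or> lt u v"
        using mf inx unfolding mono2_def by blast
      have "maxD lt f x \<noteq> None" using gt[OF inx] gf inx by simp
      then have "finite {d. \<exists>t. f x t = Some d} \<and> {d. \<exists>t. f x t = Some d} \<noteq> {}"
        unfolding maxD_def Let_def by (auto split: if_splits)
      then show "finite {d. \<exists>t. f x t = Some d}" "{d. \<exists>t. f x t = Some d} \<noteq> {}" by blast+
    qed
    define f' where "f' = (\<lambda>x t. if inX X x then Some (\<rho> (Fn c (code x) t)) else None)"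
    have fx: "f' x = (\<lambda>t. Some (\<rho> (Fn c (code x) t)))" if "inX X x" for x
      using that by (simp add: f'_def fun_eq_iff)
    have tc: "tcomp2 X \<rho> f'"
      unfolding tcomp2_def pcomp2_def
    proof (intro conjI exI[of _ "top c"] allI impI)
      fix x t n assume inx: "inX X x"
      have dm: "Dm c (code x)" using keyloc.dom[OF loc[OF inx]] .
      have e: "eval (top c) [code x, t] (Fn c (code x) t)"
        using comp_onD[OF c_top, of "[code x, t]" c] dm by simp
      show "eval (top c) [code x, t] n \<longleftrightarrow> f' x t = Some (\<rho> n)"
      proof
        assume "eval (top c) [code x, t] n"
        then have "n = Fn c (code x) t" using eval_det e by blast
        then show "f' x t = Some (\<rho> n)" by (simp add: fx[OF inx])
      next
        assume "f' x t = Some (\<rho> n)"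
        then have "\<rho> (Fn c (code x) t) = \<rho> n" by (simp add: fx[OF inx])
        then have "Fn c (code x) t = n" using bj by (simp add: bij_is_inj inj_eq)
        then show "eval (top c) [code x, t] n" using e by simp
      qed
    next
      fix x t assume "inX X x"
      then show "f' x t \<noteq> None" by (simp add: f'_def)
    qed
    have mo: "mono2 X lt f'"
      unfolding mono2_def
    proof (intro allI impI)
      fix x s t u v assume inx: "inX X x" and st: "s \<le> t" and u: "f' x s = Some u" and v: "f' x t = Some v"
      have "u = \<rho> (Fn c (code x) s)" "v = \<rho> (Fn c (code x) t)" using u v by (simp_all add: fx[OF inx])
      then show "u = v \<or> lt u v" using keyloc.mono'[OF loc[OF inx] st] by simp
    qed
    have ge: "\<forall>x. g x = (if inX X x then maxD lt f' x else None)"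
    proof
      fix x show "g x = (if inX X x then maxD lt f' x else None)"
      proof (cases "inX X x")
        case True
        have "maxD lt f' x = maxD lt f x"
          unfolding maxD_def fx[OF True] using keyloc.maxD_eq[OF loc[OF True]] .
        then show ?thesis using gf True by simp
      next
        case False then show ?thesis using gf by simp
      qed
    qed
    have "g \<in> MaxRec X lt \<rho>" unfolding MaxRec_def using tc mo ge by blast
    then show "g \<in> MaxRec X lt \<rho> \<inter> TotalX X" using gin by blast
  qed
next
  show "MaxRec X lt \<rho> \<inter> TotalX X \<subseteq> MaxPR X lt \<rho> \<inter> TotalX X"
    unfolding MaxRec_def MaxPR_def tcomp2_def by blast
qed

end
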